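(* Fix an integer $d\geq 3$ and $\rho<1$. There exist constants $C,c>0$ (depending only on $d,\rho$) such that the following holds for all sufficiently large $n$. Let $G_n$ be a $d$-regular graph on $n$ vertices whose transition matrix has all eigenvalues other than $1$ of absolute value at most $\rho$, let $v\in G_n$, and let $G$ be obtained by adding a new vertex $v'$ and the edge $\{v,v'\}$. Then for every integer $t$ with $C\log n\leq t\leq n$ and every vertex $u\neq v'$, $$\mathbb{P}_u(\tau_{v'}=t)\geq\frac{c}{n}.$$
   Context: $(X_t)$ is simple random walk on $G$, $\mathbb{P}_u$ its law with $X_0=u$, and $\tau_{v'}=\min\{t\geq1:X_t=v'\}$. *)

theory Defs
  imports Complex_Main "Jordan_Normal_Form.Char_Poly"
begin

definition regular_graph :: "nat \<Rightarrow> nat \<Rightarrow> (nat \<Rightarrow> nat \<Rightarrow> bool) \<Rightarrow> bool" where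
  "regular_graph n d E \<longleftrightarrow>
     (\<forall>x y. E x y \<longrightarrow> x < n \<and> y < n) \<and>
     (\<forall>x y. E x y \<longrightarrow> E y x) \<and>
     (\<forall>x. \<not> E x x) \<and>
     (\<forall>x<n. card {y. E x y} = d)"

definition trans_mat :: "nat \<Rightarrow> nat \<Rightarrow> (nat \<Rightarrow> nat \<Rightarrow> bool) \<Rightarrow> complex mat" where
  "trans_mat n d E = mat n n (\<lambda>(i,j). if E i j then 1 / of_nat d else 0)"

(* all eigenvalues other than (one copy of) the eigenvalue 1, counted with
   algebraic multiplicity, have absolute value at most rho *)
definition spectral_bound :: "complex mat \<Rightarrow> real \<Rightarrow> bool" where
  "spectral_bound P \<rho> \<longleftrightarrow>
     (\<exists>q. char_poly P = [:-1, 1:] * q \<and> (\<forall>z. poly q z = 0 \<longrightarrow> cmod z \<le> \<rho>))"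

(* G: G_n plus new vertex v' = n and edge {v, v'} *)
definition ext_adj :: "nat \<Rightarrow> nat \<Rightarrow> (nat \<Rightarrow> nat \<Rightarrow> bool) \<Rightarrow> nat \<Rightarrow> nat \<Rightarrow> bool" where
  "ext_adj n v E x y \<longleftrightarrow> E x y \<or> (x = v \<and> y = n) \<or> (x = n \<and> y = v)"

definition srw_prob :: "nat set \<Rightarrow> (nat \<Rightarrow> nat \<Rightarrow> bool) \<Rightarrow> nat \<Rightarrow> nat \<Rightarrow> real" where
  "srw_prob V A x y = (if A x y then 1 / real (card {z\<in>V. A x z}) else 0)"

(* first_hit V p w t u = P_u(tau_w = t), where tau_w = min {t >= 1. X_t = w}
   for the Markov chain with transition probabilities p on state space V *)
fun first_hit :: "nat set \<Rightarrow> (nat \<Rightarrow> nat \<Rightarrow> real) \<Rightarrow> nat \<Rightarrow> nat \<Rightarrow> nat \<Rightarrow> real" where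
  "first_hit V p w 0 u = 0"
| "first_hit V p w (Suc 0) u = p u w"
| "first_hit V p w (Suc (Suc k)) u = (\<Sum>x\<in>V - {w}. p u x * first_hit V p w (Suc k) x)"

end

theory Submission
  imports Defs "Jordan_Normal_Form.Spectral_Radius"
begin


definition Pr :: "nat \<Rightarrow> nat \<Rightarrow> (nat \<Rightarrow> nat \<Rightarrow> bool) \<Rightarrow> real mat" where
  "Pr n d E = mat n n (\<lambda>(i,j). if E i j then 1 / real d else 0)"
definition Jr :: "nat \<Rightarrow> real mat" where
  "Jr n = mat n n (\<lambda>_. 1 / real n)"
definition Rr :: "nat \<Rightarrow> nat \<Rightarrow> (nat \<Rightarrow> nat \<Rightarrow> bool) \<Rightarrow> real mat" where
  "Rr n d E = Pr n d E - Jr n"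

lemma Pr_carrier[simp]: "Pr n d E \<in> carrier_mat n n" by (simp add: Pr_def)
lemma Jr_carrier[simp]: "Jr n \<in> carrier_mat n n" by (simp add: Jr_def)
lemma dims[simp]: "dim_row (Pr n d E) = n" "dim_col (Pr n d E) = n" "dim_row (Jr n) = n" "dim_col (Jr n) = n"
  "dim_row (Rr n d E) = n" "dim_col (Rr n d E) = n"
  by (auto simp: Pr_def Jr_def Rr_def)
lemma Rr_carrier[simp]: "Rr n d E \<in> carrier_mat n n" unfolding Rr_def by (rule minus_carrier_mat, auto)

context fixes n d E assumes reg: "regular_graph n d E" and dpos: "d > 0"
begin

lemma Ebound: "E x y \<Longrightarrow> x < n \<and> y < n" using reg unfolding regular_graph_def by blast
lemma Esym: "E x y \<Longrightarrow> E y x" using reg unfolding regular_graph_def by blast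
lemma Eirr: "\<not> E x x" using reg unfolding regular_graph_def by blast
lemma Edeg: "x < n \<Longrightarrow> card {y. E x y} = d" using reg unfolding regular_graph_def by blast

lemma Edeg': "x < n \<Longrightarrow> card {y \<in> {0..<n}. E x y} = d"
proof -
  assume "x < n"
  have "{y \<in> {0..<n}. E x y} = {y. E x y}" using Ebound by auto
  thus ?thesis using Edeg[OF \<open>x<n\<close>] by simp
qed

lemma row_sum: "x < n \<Longrightarrow> (\<Sum>l = 0..<n. (if E x l then 1 / real d else 0)) = 1"
proof -
  assume x: "x < n"
  have "(\<Sum>l = 0..<n. (if E x l then 1 / real d else 0)) = (\<Sum>l \<in> {y \<in> {0..<n}. E x y}. 1 / real d)"
    by (simp add: sum.inter_filter[symmetric])
  also have "\<dots> = 1" using Edeg'[OF x] dpos by simp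
  finally show ?thesis .
qed

lemma col_sum: "x < n \<Longrightarrow> (\<Sum>l = 0..<n. (if E l x then 1 / real d else 0)) = 1"
proof -
  assume x: "x < n"
  have "(\<Sum>l = 0..<n. (if E l x then 1 / real d else 0)) = (\<Sum>l = 0..<n. (if E x l then 1 / real d else 0))"
    by (rule sum.cong, auto dest: Esym)
  thus ?thesis using row_sum[OF x] by simp
qed

lemma PJ: "Pr n d E * Jr n = Jr n"
proof (rule eq_matI)
  fix i j assume i: "i < dim_row (Jr n)" and j: "j < dim_col (Jr n)"
  hence "(Pr n d E * Jr n) $$ (i,j) = (\<Sum>l = 0..<n. (if E i l then 1 / real d else 0) * (1 / real n))"
    by (simp add: Pr_def Jr_def scalar_prod_def)
  also have "\<dots> = (\<Sum>l = 0..<n. (if E i l then 1 / real d else 0)) * (1 / real n)"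
    by (simp add: sum_divide_distrib)
  also have "\<dots> = 1 / real n" using row_sum i by (simp add: Jr_def)
  finally show "(Pr n d E * Jr n) $$ (i,j) = Jr n $$ (i,j)" using i j by (simp add: Jr_def)
qed (auto simp: Jr_def Pr_def)

lemma JP: "Jr n * Pr n d E = Jr n"
proof (rule eq_matI)
  fix i j assume i: "i < dim_row (Jr n)" and j: "j < dim_col (Jr n)"
  hence "(Jr n * Pr n d E) $$ (i,j) = (\<Sum>l = 0..<n. (1 / real n) * (if E l j then 1 / real d else 0))"
    by (simp add: Pr_def Jr_def scalar_prod_def)
  also have "\<dots> = (1 / real n) * (\<Sum>l = 0..<n. (if E l j then 1 / real d else 0))"
    by (simp add: sum_distrib_left)
  also have "\<dots> = 1 / real n" using col_sum j by (simp add: Jr_def)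
  finally show "(Jr n * Pr n d E) $$ (i,j) = Jr n $$ (i,j)" using i j by (simp add: Jr_def)
qed (auto simp: Jr_def Pr_def)

end

lemma JJ: "n > 0 \<Longrightarrow> Jr n * Jr n = Jr n"
  by (rule eq_matI, auto simp: Jr_def scalar_prod_def)

context fixes n d E assumes reg: "regular_graph n d E" and dpos: "d > 0" and npos: "n > 0"
begin

lemma RJ: "Rr n d E * Jr n = 0\<^sub>m n n"
  unfolding Rr_def by (subst minus_mult_distrib_mat[of _ n n _ _ n], auto simp: PJ[OF reg dpos] JJ[OF npos])

lemma JR: "Jr n * Rr n d E = 0\<^sub>m n n"
  unfolding Rr_def by (subst mult_minus_distrib_mat[of _ n n _ n], auto simp: JP[OF reg dpos] JJ[OF npos])

lemma P_RJ: "Pr n d E = Rr n d E + Jr n"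
  by (rule eq_matI, auto simp: Rr_def Pr_def Jr_def)
lemma P_JR: "Pr n d E = Jr n + Rr n d E"
  by (rule eq_matI, auto simp: Rr_def Pr_def Jr_def)

lemma Ppow: "Pr n d E ^\<^sub>m (Suc s) = Jr n + Rr n d E ^\<^sub>m (Suc s)"
proof (induct s)
  case 0
  have "Pr n d E ^\<^sub>m (Suc 0) = Pr n d E" "Rr n d E ^\<^sub>m (Suc 0) = Rr n d E" by simp_all
  then show ?case using P_JR by simp
next
  case (Suc s)
  let ?P = "Pr n d E" and ?R = "Rr n d E" and ?J = "Jr n"
  have c1: "?R ^\<^sub>m Suc s \<in> carrier_mat n n" by (rule pow_carrier_mat, simp)
  have "?P ^\<^sub>m Suc (Suc s) = (?J + ?R ^\<^sub>m Suc s) * ?P" using Suc by simp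
  also have "\<dots> = ?J * ?P + ?R ^\<^sub>m Suc s * ?P"
    by (rule add_mult_distrib_mat[OF Jr_carrier c1 Pr_carrier])
  also have "?J * ?P = ?J" by (rule JP[OF reg dpos])
  also have "?R ^\<^sub>m Suc s * ?P = ?R ^\<^sub>m Suc s * ?R + ?R ^\<^sub>m Suc s * ?J"
    by (subst P_RJ, rule mult_add_distrib_mat[OF c1 Rr_carrier Jr_carrier])
  also have "?R ^\<^sub>m Suc s * ?J = 0\<^sub>m n n"
  proof -
    have "?R ^\<^sub>m Suc s * ?J = ?R ^\<^sub>m s * (?R * ?J)" by (simp, rule assoc_mult_mat[OF pow_carrier_mat[OF Rr_carrier] Rr_carrier Jr_carrier])
    also have "\<dots> = 0\<^sub>m n n" by (simp add: RJ right_mult_zero_mat[OF pow_carrier_mat[OF Rr_carrier]])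
    finally show ?thesis .
  qed
  finally have "?P ^\<^sub>m Suc (Suc s) = ?J + (?R ^\<^sub>m Suc s * ?R + 0\<^sub>m n n)" .
  moreover have c2: "?R ^\<^sub>m Suc s * ?R \<in> carrier_mat n n" by (rule mult_carrier_mat[OF c1], simp)
  ultimately show ?case by simp
qed

lemma Pr_sym: "transpose_mat (Pr n d E) = Pr n d E"
  by (rule eq_matI, auto simp: Pr_def dest: Esym[OF reg dpos])

lemma Rr_sym: "transpose_mat (Rr n d E) = Rr n d E"
  by (rule eq_matI, auto simp: Rr_def Pr_def Jr_def dest: Esym[OF reg dpos])

end


lemma CS_sum:
  fixes a b :: "nat \<Rightarrow> real"
  shows "(\<Sum>i\<in>I. a i * b i)\<^sup>2 \<le> (\<Sum>i\<in>I. (a i)\<^sup>2) * (\<Sum>i\<in>I. (b i)\<^sup>2)"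
proof (cases "finite I")
  case False thus ?thesis by simp
next
  case fin: True
  show ?thesis
  proof (cases "(\<Sum>i\<in>I. (b i)\<^sup>2) = 0")
    case True
    hence "\<forall>i\<in>I. b i = 0" using fin by (simp add: sum_nonneg_eq_0_iff)
    thus ?thesis by simp
  next
    case False
    define B where "B = (\<Sum>i\<in>I. (b i)\<^sup>2)"
    define S where "S = (\<Sum>i\<in>I. a i * b i)"
    define A where "A = (\<Sum>i\<in>I. (a i)\<^sup>2)"
    have Bpos: "B > 0" using False unfolding B_def by (metis sum_nonneg zero_le_power2 order_le_less)
    define t where "t = S / B"
    have "0 \<le> (\<Sum>i\<in>I. (a i - t * b i)\<^sup>2)" by (simp add: sum_nonneg)
    also have "\<dots> = A - 2 * t * S + t\<^sup>2 * B"
      unfolding A_def S_def B_def power2_eq_square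
      by (simp add: algebra_simps sum.distrib sum_subtractf sum_distrib_left)
    also have "\<dots> = A - S\<^sup>2 / B" using Bpos unfolding t_def by (simp add: field_simps power2_eq_square)
    finally have "S\<^sup>2 / B \<le> A" by simp
    hence "S\<^sup>2 \<le> A * B" using Bpos by (simp add: field_simps)
    thus ?thesis unfolding S_def A_def B_def .
  qed
qed

lemma CS_vec:
  fixes u w :: "real vec"
  assumes "u \<in> carrier_vec n" "w \<in> carrier_vec n"
  shows "(u \<bullet> w)\<^sup>2 \<le> (u \<bullet> u) * (w \<bullet> w)"
  using assms CS_sum[of "\<lambda>i. u $ i" "\<lambda>i. w $ i" "{0..<n}"]
  by (simp add: scalar_prod_def power2_eq_square)

lemma sq_nonneg_vec: "(u :: real vec) \<bullet> u \<ge> 0"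
  unfolding scalar_prod_def by (simp add: sum_nonneg)

context fixes R :: "real mat" and n :: nat
  assumes R: "R \<in> carrier_mat n n" and sym: "transpose_mat R = R"
begin

lemma dimR[simp]: "dim_row R = n" "dim_col R = n" using R by auto
lemma Rpow[simp]: "R ^\<^sub>m k \<in> carrier_mat n n" using R by simp
lemma Rmv[simp]: "y \<in> carrier_vec n \<Longrightarrow> R ^\<^sub>m k *\<^sub>v y \<in> carrier_vec n"
  by (rule mult_mat_vec_carrier[OF Rpow])

lemma mpow_add: "R ^\<^sub>m a * R ^\<^sub>m b = R ^\<^sub>m (a + b)"
proof (induct b)
  case 0 thus ?case using R by simp
next
  case (Suc b)
  have "R ^\<^sub>m a * R ^\<^sub>m Suc b = (R ^\<^sub>m a * R ^\<^sub>m b) * R"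
    by (simp, rule assoc_mult_mat[symmetric, of _ n n _ n _ n], insert R, auto)
  thus ?case using Suc by simp
qed

lemma mpow_sym: "transpose_mat (R ^\<^sub>m k) = R ^\<^sub>m k"
proof (induct k)
  case 0 thus ?case using R by simp
next
  case (Suc k)
  have "transpose_mat (R ^\<^sub>m Suc k) = transpose_mat R * transpose_mat (R ^\<^sub>m k)"
    by (simp, rule transpose_mult[of _ n n _ n], insert R, auto)
  also have "\<dots> = R * R ^\<^sub>m k" using Suc sym by simp
  also have "\<dots> = R ^\<^sub>m 1 * R ^\<^sub>m k" using R by simp
  also have "\<dots> = R ^\<^sub>m (k + 1)" by (subst mpow_add, simp)
  finally show ?case by simp
qed

lemma nv_eq: assumes y: "y \<in> carrier_vec n"
  shows "(R ^\<^sub>m j *\<^sub>v y) \<bullet> (R ^\<^sub>m j *\<^sub>v y) = y \<bullet> (R ^\<^sub>m (j + j) *\<^sub>v y)"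
proof -
  have Rj: "R ^\<^sub>m j \<in> carrier_mat n n" using R by simp
  have "(R ^\<^sub>m j *\<^sub>v y) \<bullet> (R ^\<^sub>m j *\<^sub>v y) = (transpose_mat (R ^\<^sub>m j) *\<^sub>v (R ^\<^sub>m j *\<^sub>v y)) \<bullet> y"
    by (rule transpose_vec_mult_scalar[symmetric, OF Rj y], insert Rj y, auto)
  also have "transpose_mat (R ^\<^sub>m j) *\<^sub>v (R ^\<^sub>m j *\<^sub>v y) = R ^\<^sub>m (j + j) *\<^sub>v y"
    using mpow_sym mpow_add[of j j, symmetric] Rj y by (simp add: assoc_mult_mat_vec[OF Rj Rj y])
  also have "(R ^\<^sub>m (j + j) *\<^sub>v y) \<bullet> y = y \<bullet> (R ^\<^sub>m (j + j) *\<^sub>v y)"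
    by (rule comm_scalar_prod[of _ n], insert R y, auto)
  finally show ?thesis .
qed

definition nvk where "nvk y k = (R ^\<^sub>m k *\<^sub>v y) \<bullet> (R ^\<^sub>m k *\<^sub>v y)"

lemma nvk_nonneg: "nvk y k \<ge> 0" unfolding nvk_def by (rule sq_nonneg_vec)

lemma nvk_step: assumes y: "y \<in> carrier_vec n"
  shows "(nvk y j)\<^sup>2 \<le> nvk y 0 * nvk y (j + j)"
proof -
  have "(nvk y j)\<^sup>2 = (y \<bullet> (R ^\<^sub>m (j + j) *\<^sub>v y))\<^sup>2" unfolding nvk_def nv_eq[OF y] ..
  also have "\<dots> \<le> (y \<bullet> y) * ((R ^\<^sub>m (j + j) *\<^sub>v y) \<bullet> (R ^\<^sub>m (j + j) *\<^sub>v y))"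
    by (rule CS_vec[of _ n], insert y R, auto)
  also have "y \<bullet> y = nvk y 0" unfolding nvk_def using y R by simp
  finally show ?thesis unfolding nvk_def by simp
qed

lemma nvk_double: assumes y: "y \<in> carrier_vec n"
  shows "(nvk y 1) ^ (2 ^ m) \<le> nvk y (2 ^ m) * (nvk y 0) ^ (2 ^ m - 1)"
proof (induct m)
  case 0 thus ?case by simp
next
  case (Suc m)
  let ?a = "nvk y 1" and ?b = "nvk y (2^m)" and ?z = "nvk y 0" and ?N = "(2::nat)^m"
  have N: "?N \<ge> 1" by simp
  have "?a ^ (2 ^ Suc m) = (?a ^ ?N)\<^sup>2" by (simp add: power_mult[symmetric] mult.commute)
  also have "\<dots> \<le> (?b * ?z ^ (?N - 1))\<^sup>2"
    by (rule power_mono[OF Suc], insert nvk_nonneg, simp)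
  also have "\<dots> = ?b\<^sup>2 * ?z ^ (2 * (?N - 1))" by (simp add: power_mult_distrib power_mult[symmetric] mult.commute)
  also have "\<dots> \<le> (?z * nvk y (?N + ?N)) * ?z ^ (2 * (?N - 1))"
    by (rule mult_right_mono[OF nvk_step[OF y]], insert nvk_nonneg, simp)
  also have "\<dots> = nvk y (2 ^ Suc m) * ?z ^ (2 ^ Suc m - 1)"
  proof -
    obtain p where p: "?N = Suc p" using N by (cases ?N, auto)
    have e2: "2 ^ Suc m - 1 = Suc (2 * (?N - 1))" by (simp only: power_Suc p, simp)
    have e1: "?N + ?N = 2 ^ Suc m" by simp
    have "?z ^ (2 ^ Suc m - 1) = ?z * ?z ^ (2 * (?N - 1))" by (subst e2, simp)
    have e3: "nvk y (?N + ?N) = nvk y (2 ^ Suc m)" by (simp only: power_Suc mult_2)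
    show ?thesis unfolding e3 \<open>?z ^ (2 ^ Suc m - 1) = _\<close> by (simp only: ac_simps)
  qed
  finally show ?case .
qed

lemma nvk_bound:
  assumes bound: "\<And>k i j. i < n \<Longrightarrow> j < n \<Longrightarrow> \<bar>(R ^\<^sub>m k) $$ (i,j)\<bar> \<le> c * r ^ k"
    and y: "y \<in> carrier_vec n"
  shows "nvk y k \<le> real n * (c * (\<Sum>j<n. \<bar>y $ j\<bar>))\<^sup>2 * (r ^ k)\<^sup>2"
proof -
  define Y where "Y = (\<Sum>j<n. \<bar>y $ j\<bar>)"
  have Rk: "R ^\<^sub>m k \<in> carrier_mat n n" using R by simp
  have ent: "\<bar>(R ^\<^sub>m k *\<^sub>v y) $ i\<bar> \<le> c * r ^ k * Y" if i: "i < n" for i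
  proof -
    have "(R ^\<^sub>m k *\<^sub>v y) $ i = row (R ^\<^sub>m k) i \<bullet> y" by (rule index_mult_mat_vec, insert i Rk, simp)
    also have "\<dots> = (\<Sum>j\<in>{0..<n}. row (R ^\<^sub>m k) i $ j * y $ j)" unfolding scalar_prod_def using y by simp
    also have "\<dots> = (\<Sum>j\<in>{0..<n}. (R ^\<^sub>m k) $$ (i,j) * y $ j)" by (rule sum.cong, insert i Rk, auto)
    also have "\<dots> = (\<Sum>j<n. (R ^\<^sub>m k) $$ (i,j) * y $ j)" by (simp add: atLeast0LessThan)
    also have "\<bar>\<dots>\<bar> \<le> (\<Sum>j<n. \<bar>(R ^\<^sub>m k) $$ (i,j) * y $ j\<bar>)" by (rule sum_abs)
    also have "\<dots> \<le> (\<Sum>j<n. c * r ^ k * \<bar>y $ j\<bar>)"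
      by (rule sum_mono, simp add: abs_mult, rule mult_right_mono[OF bound[OF i]], auto)
    also have "\<dots> = c * r ^ k * Y" unfolding Y_def by (simp add: sum_distrib_left)
    finally show ?thesis .
  qed
  have "nvk y k = (\<Sum>i<n. ((R ^\<^sub>m k *\<^sub>v y) $ i)\<^sup>2)"
    unfolding nvk_def using Rk y by (simp add: scalar_prod_def atLeast0LessThan power2_eq_square)
  also have "\<dots> \<le> (\<Sum>i<n. (c * r ^ k * Y)\<^sup>2)"
    by (rule sum_mono, metis ent abs_ge_zero power2_abs power_mono atLeast0LessThan lessThan_iff)
  also have "\<dots> = real n * (c * Y)\<^sup>2 * (r ^ k)\<^sup>2" by (simp add: power_mult_distrib)
  finally show ?thesis unfolding Y_def .
qed

lemma contraction:
  assumes bound: "\<And>k i j. i < n \<Longrightarrow> j < n \<Longrightarrow> \<bar>(R ^\<^sub>m k) $$ (i,j)\<bar> \<le> c * r ^ k"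
    and r: "r > 0" and y: "y \<in> carrier_vec n"
  shows "nvk y 1 \<le> r\<^sup>2 * nvk y 0"
proof (cases "nvk y 0 = 0")
  case True
  have "(nvk y 1)\<^sup>2 \<le> 0" using nvk_step[OF y, of 1] True by simp
  hence "nvk y 1 = 0" by simp
  thus ?thesis using True by simp
next
  case False
  define z where "z = nvk y 0"
  define a where "a = nvk y 1"
  define K where "K = real n * (c * (\<Sum>j<n. \<bar>y $ j\<bar>))\<^sup>2"
  have z: "z > 0" using False nvk_nonneg[of y 0] unfolding z_def by simp
  show ?thesis
  proof (rule ccontr)
    assume "\<not> ?thesis"
    hence gt: "a > r\<^sup>2 * z" unfolding a_def z_def by simp
    define t where "t = a / (r\<^sup>2 * z)"
    have rz: "r\<^sup>2 * z > 0" using r z by simp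
    have t1: "t > 1" unfolding t_def using gt rz by simp
    have main: "t ^ (2^m) \<le> K / z" for m
    proof -
      let ?M = "(2::nat)^m"
      have M: "?M \<ge> 1" by simp
      have "a ^ ?M \<le> nvk y ?M * z ^ (?M - 1)" using nvk_double[OF y, of m] unfolding a_def z_def .
      also have "\<dots> \<le> (K * (r ^ ?M)\<^sup>2) * z ^ (?M - 1)"
        using nvk_bound[OF bound y, where k="2^m", folded K_def] z by (simp add: mult_right_mono)
      finally have 1: "a ^ ?M \<le> K * (r ^ ?M)\<^sup>2 * z ^ (?M - 1)" .
      have "t ^ ?M = a ^ ?M / ((r\<^sup>2) ^ ?M * z ^ ?M)" unfolding t_def by (simp add: power_divide power_mult_distrib)
      also have "z ^ ?M = z * z ^ (?M - 1)"
      proof -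
        obtain p where p: "?M = Suc p" using M by (cases ?M, auto)
        show ?thesis unfolding p by simp
      qed
      also have "a ^ ?M / ((r\<^sup>2) ^ ?M * (z * z ^ (?M - 1))) \<le> K * (r ^ ?M)\<^sup>2 * z ^ (?M - 1) / ((r\<^sup>2) ^ ?M * (z * z ^ (?M - 1)))"
        by (rule divide_right_mono[OF 1], insert z r, simp)
      also have "\<dots> = K / z" using z r by (simp add: power_mult[symmetric] power_mult_distrib field_simps)
      finally show ?thesis .
    qed
    obtain m :: nat where m: "real m * (t - 1) > K / z"
      using ex_less_of_nat_mult[of "t - 1" "K / z"] t1 by auto
    have "1 + real m * (t - 1) \<le> (1 + (t - 1)) ^ m" by (rule Bernoulli_inequality, insert t1, simp)
    also have "\<dots> = t ^ m" by simp
    also have "\<dots> \<le> t ^ (2 ^ m)" by (rule power_increasing[OF less_imp_le[OF less_exp]], insert t1, simp)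
    also have "\<dots> \<le> K / z" by (rule main)
    finally show False using m t1 by simp
  qed
qed

lemma contraction_iter:
  assumes bound: "\<And>k i j. i < n \<Longrightarrow> j < n \<Longrightarrow> \<bar>(R ^\<^sub>m k) $$ (i,j)\<bar> \<le> c * r ^ k"
    and r: "r > 0" and y: "y \<in> carrier_vec n"
  shows "nvk y s \<le> (r\<^sup>2) ^ s * nvk y 0"
  using y
proof (induct s arbitrary: y)
  case 0 thus ?case by simp
next
  case (Suc s)
  have Ry: "R *\<^sub>v y \<in> carrier_vec n" using R Suc by simp
  have "R ^\<^sub>m Suc s *\<^sub>v y = R ^\<^sub>m s *\<^sub>v (R *\<^sub>v y)"
    by (simp, rule assoc_mult_mat_vec[of _ n n], insert R Suc, auto)
  hence "nvk y (Suc s) = nvk (R *\<^sub>v y) s" unfolding nvk_def by simp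
  also have "\<dots> \<le> (r\<^sup>2) ^ s * nvk (R *\<^sub>v y) 0" by (rule Suc(1)[OF Ry])
  also have "nvk (R *\<^sub>v y) 0 = nvk y 1" unfolding nvk_def using R Suc by simp
  also have "(r\<^sup>2) ^ s * nvk y 1 \<le> (r\<^sup>2) ^ s * (r\<^sup>2 * nvk y 0)"
    using contraction[OF bound r Suc(2)] by (simp add: mult_left_mono)
  finally show ?case by (simp add: ac_simps)
qed

lemma entry_bound:
  assumes bound: "\<And>k i j. i < n \<Longrightarrow> j < n \<Longrightarrow> \<bar>(R ^\<^sub>m k) $$ (i,j)\<bar> \<le> c * r ^ k"
    and r: "r > 0" and i: "i < n" and j: "j < n"
  shows "\<bar>(R ^\<^sub>m s) $$ (i,j)\<bar> \<le> r ^ s"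
proof -
  let ?y = "unit_vec n j"
  have y: "?y \<in> carrier_vec n" by simp
  have Rs: "R ^\<^sub>m s \<in> carrier_mat n n" using R by simp
  have "(R ^\<^sub>m s *\<^sub>v ?y) $ i = row (R ^\<^sub>m s) i \<bullet> ?y" using Rs i R by (intro index_mult_mat_vec, simp)
  also have "\<dots> = row (R ^\<^sub>m s) i $ j" using j by simp
  also have "\<dots> = (R ^\<^sub>m s) $$ (i,j)" using Rs i j by simp
  finally have e: "(R ^\<^sub>m s *\<^sub>v ?y) $ i = (R ^\<^sub>m s) $$ (i,j)" .
  have "((R ^\<^sub>m s *\<^sub>v ?y) $ i)\<^sup>2 \<le> nvk ?y s"
  proof -
    have "nvk ?y s = (\<Sum>l\<in>{0..<n}. ((R ^\<^sub>m s *\<^sub>v ?y) $ l)\<^sup>2)"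
      unfolding nvk_def using Rs by (simp add: scalar_prod_def power2_eq_square)
    also have "\<dots> \<ge> ((R ^\<^sub>m s *\<^sub>v ?y) $ i)\<^sup>2"
      by (rule member_le_sum, insert i, auto)
    finally show ?thesis .
  qed
  also have "\<dots> \<le> (r\<^sup>2) ^ s * nvk ?y 0" by (rule contraction_iter[OF bound r y])
  also have "nvk ?y 0 = 1" unfolding nvk_def using j by simp
  finally have "((R ^\<^sub>m s) $$ (i,j))\<^sup>2 \<le> (r ^ s)\<^sup>2" unfolding e by (simp add: power_mult[symmetric] mult.commute power_even_eq)
  thus ?thesis using r by (simp add: abs_le_square_iff[symmetric])
qed

end
declare dimR[simp del] Rpow[simp del] Rmv[simp del]


lemma sum_ind_eq: "(a::nat) < n \<Longrightarrow> (\<Sum>l\<in>{0..<n}. (if l = a then f l else 0)) = (f a :: 'b :: comm_monoid_add)"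
proof -
  assume a: "a < n"
  have "(\<Sum>l\<in>{0..<n}. (if l = a then f l else 0)) = (if a = a then f a else 0) + (\<Sum>l\<in>{0..<n} - {a}. (if l = a then f l else 0))"
    by (rule sum.remove, insert a, auto)
  also have "(\<Sum>l\<in>{0..<n} - {a}. (if l = a then f l else 0)) = 0" by (rule sum.neutral, auto)
  finally show ?thesis by simp
qed

lemma det_I_plus_J:
  fixes g :: complex
  assumes n: "n > 0"
  shows "det (mat n n (\<lambda>(i,j). (if i = j then 1 else 0) + g / of_nat n)) = 1 + g"
proof -
  define K where "K = mat n n (\<lambda>(i,j). (if i = j then (1::complex) else 0) + g / of_nat n)"
  define U where "U = mat n n (\<lambda>(i,j). if j = 0 then (1::complex) else (if i = j then 1 else 0))"
  define L where "L = mat n n (\<lambda>(i,j). (if i = j then (1::complex) else 0) - (if j = 0 \<and> i \<noteq> 0 then 1 else 0))"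
  define M where "M = mat n n (\<lambda>(i,j). if j = 0 then 1 + g else (if i = j then (1::complex) else 0) + g / of_nat n)"
  define T where "T = mat n n (\<lambda>(i,j). if i = 0 then (if j = 0 then 1 + g else g / of_nat n) else (if i = j then (1::complex) else 0))"
  have K: "K \<in> carrier_mat n n" and U: "U \<in> carrier_mat n n" and L: "L \<in> carrier_mat n n"
    and M: "M \<in> carrier_mat n n" and T: "T \<in> carrier_mat n n"
    unfolding K_def U_def L_def M_def T_def by auto
  have KU: "K * U = M"
  proof (rule eq_matI)
    fix i j assume i: "i < dim_row M" and j: "j < dim_col M"
    hence i: "i < n" and j: "j < n" unfolding M_def by auto
    have "(K * U) $$ (i,j) = (\<Sum>l\<in>{0..<n}. K $$ (i,l) * U $$ (l,j))"
      using i j K U by (simp add: scalar_prod_def)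
    also have "\<dots> = M $$ (i,j)"
    proof (cases "j = 0")
      case True
      have "(\<Sum>l\<in>{0..<n}. K $$ (i,l) * U $$ (l,j)) = (\<Sum>l\<in>{0..<n}. (if l = i then 1 else 0) + g / of_nat n)"
        by (rule sum.cong, insert True i, auto simp: K_def U_def)
      also have "\<dots> = 1 + g" using i n by (simp add: sum.distrib sum_ind_eq)
      finally show ?thesis using True i j by (simp add: M_def)
    next
      case False
      have "(\<Sum>l\<in>{0..<n}. K $$ (i,l) * U $$ (l,j)) = (\<Sum>l\<in>{0..<n}. if l = j then K $$ (i,j) else 0)"
        by (rule sum.cong, insert False i j, auto simp: U_def)
      also have "\<dots> = K $$ (i,j)" using j by (simp add: sum_ind_eq)
      finally show ?thesis using False i j by (simp add: M_def K_def)
    qed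
    finally show "(K * U) $$ (i,j) = M $$ (i,j)" .
  qed (insert K U M, auto)
  have LM: "L * M = T"
  proof (rule eq_matI)
    fix i j assume i: "i < dim_row T" and j: "j < dim_col T"
    hence i: "i < n" and j: "j < n" unfolding T_def by auto
    have "(L * M) $$ (i,j) = (\<Sum>l\<in>{0..<n}. L $$ (i,l) * M $$ (l,j))"
      using i j L M by (simp add: scalar_prod_def)
    also have "\<dots> = (\<Sum>l\<in>{0..<n}. (if l = i then M $$ (i,j) else 0) - (if l = 0 then (if i \<noteq> 0 then M $$ (0,j) else 0) else 0))"
      by (rule sum.cong, insert i, auto simp: L_def)
    also have "\<dots> = M $$ (i,j) - (if i \<noteq> 0 then M $$ (0,j) else 0)"
      using i n by (simp add: sum_subtractf sum_ind_eq)
    also have "\<dots> = T $$ (i,j)" using i j n by (auto simp: M_def T_def)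
    finally show "(L * M) $$ (i,j) = T $$ (i,j)" .
  qed (insert L M T, auto)
  have dL: "det L = 1"
  proof -
    have "det L = prod_list (diag_mat L)"
      by (rule det_lower_triangular[OF _ L], auto simp: L_def)
    also have "\<dots> = 1" unfolding prod_list_diag_prod using L by (auto simp: L_def intro!: prod.neutral)
    finally show ?thesis .
  qed
  have dU: "det U = 1"
  proof -
    have "det U = prod_list (diag_mat U)"
      by (rule det_lower_triangular[OF _ U], auto simp: U_def)
    also have "\<dots> = 1" unfolding prod_list_diag_prod using U by (simp add: U_def)
    finally show ?thesis .
  qed
  have dT: "det T = 1 + g"
  proof -
    have "det T = prod_list (diag_mat T)"
      by (rule det_upper_triangular[OF _ T], auto simp: T_def upper_triangular_def)
    also have "\<dots> = (\<Prod>i\<in>{0..<n}. if i = 0 then 1 + g else 1)"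
      unfolding prod_list_diag_prod using T by (intro prod.cong, auto simp: T_def)
    also have "\<dots> = 1 + g" using n by (simp add: prod.delta')
    finally show ?thesis .
  qed
  have "det T = det L * (det K * det U)"
    unfolding LM[symmetric] KU[symmetric] using K U L
    by (simp add: det_mult[OF L mult_carrier_mat[OF K U]] det_mult[OF K U])
  hence "det K = 1 + g" using dT dL dU by simp
  thus ?thesis unfolding K_def .
qed


lemma trans_mat_hom: "trans_mat n d E = of_real_hom.mat_hom (Pr n d E)"
  by (rule eq_matI, auto simp: trans_mat_def Pr_def)

definition Jc :: "nat \<Rightarrow> complex mat" where "Jc n = mat n n (\<lambda>_. 1 / of_nat n)"

lemma Rc_eq: "of_real_hom.mat_hom (Rr n d E) = trans_mat n d E - Jc n"
  by (rule eq_matI, auto simp: trans_mat_def Rr_def Pr_def Jr_def Jc_def)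

context fixes n d E assumes reg: "regular_graph n d E" and dpos: "d > 0" and npos: "n > 0"
begin

lemma row_sum_c: "i < n \<Longrightarrow> (\<Sum>l\<in>{0..<n}. trans_mat n d E $$ (i,l)) = 1"
proof -
  assume i: "i < n"
  have "(\<Sum>l\<in>{0..<n}. trans_mat n d E $$ (i,l)) = (\<Sum>l\<in>{0..<n}. complex_of_real (if E i l then 1 / real d else 0))"
    by (rule sum.cong, insert i, auto simp: trans_mat_def)
  also have "\<dots> = complex_of_real (\<Sum>l\<in>{0..<n}. (if E i l then 1 / real d else 0))" by simp
  also have "\<dots> = 1" using row_sum[OF reg dpos i] by simp
  finally show ?thesis .
qed

lemma charpoly_pointwise:
  fixes x :: complex assumes x: "x \<noteq> 1"
  shows "poly (char_poly (trans_mat n d E - Jc n)) x * (x - 1) = poly (char_poly (trans_mat n d E)) x * x"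
proof -
  let ?P = "trans_mat n d E"
  define g where "g = 1 / (x - 1)"
  define K where "K = mat n n (\<lambda>(i,j). (if i = j then 1 else 0) + g / of_nat n)"
  define B where "B = - char_matrix ?P x"
  have P: "?P \<in> carrier_mat n n" by (simp add: trans_mat_def)
  have R: "?P - Jc n \<in> carrier_mat n n" by (rule minus_carrier_mat, simp add: Jc_def)
  have B: "B \<in> carrier_mat n n" unfolding B_def using P by simp
  have Bent: "B $$ (i,j) = (if i = j then x else 0) - ?P $$ (i,j)" if "i < n" "j < n" for i j
    using that P unfolding B_def char_matrix_def by simp
  have main: "- char_matrix (?P - Jc n) x = B * K"
  proof (rule eq_matI)
    fix i j assume ij: "i < dim_row (B * K)" "j < dim_col (B * K)"
    hence i: "i < n" and j: "j < n" using B by (auto simp: K_def)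
    have "(B * K) $$ (i,j) = (\<Sum>l\<in>{0..<n}. B $$ (i,l) * K $$ (l,j))"
      using i j B by (simp add: scalar_prod_def K_def)
    also have "\<dots> = (\<Sum>l\<in>{0..<n}. (if l = j then B $$ (i,j) else 0) + B $$ (i,l) * (g / of_nat n))"
      by (rule sum.cong, insert j, auto simp: K_def algebra_simps)
    also have "\<dots> = B $$ (i,j) + (\<Sum>l\<in>{0..<n}. B $$ (i,l)) * (g / of_nat n)"
      using j by (simp add: sum.distrib sum_ind_eq sum_distrib_right sum_divide_distrib)
    also have "(\<Sum>l\<in>{0..<n}. B $$ (i,l)) = x - 1"
    proof -
      have "(\<Sum>l\<in>{0..<n}. B $$ (i,l)) = (\<Sum>l\<in>{0..<n}. (if l = i then x else 0) - ?P $$ (i,l))"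
        by (rule sum.cong, insert i Bent, auto)
      also have "\<dots> = x - 1" using i row_sum_c[OF i] by (simp add: sum_subtractf sum_ind_eq)
      finally show ?thesis .
    qed
    also have "B $$ (i,j) + (x - 1) * (g / of_nat n) = (- char_matrix (?P - Jc n) x) $$ (i,j)"
      using i j x P Bent[OF i j] unfolding g_def char_matrix_def by (simp add: Jc_def)
    finally show "(- char_matrix (?P - Jc n) x) $$ (i,j) = (B * K) $$ (i,j)" ..
  qed (insert B P, auto simp: K_def char_matrix_def Jc_def)
  have "poly (char_poly (?P - Jc n)) x = det (B * K)" unfolding char_poly_matrix[OF R] main ..
  also have "\<dots> = det B * det K" by (rule det_mult[OF B], simp add: K_def)
  also have "det K = 1 + g" unfolding K_def by (rule det_I_plus_J[OF npos])
  also have "det B = poly (char_poly ?P) x" unfolding B_def char_poly_matrix[OF P] ..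
  finally show ?thesis using x unfolding g_def by (simp add: field_simps)
qed

lemma charpoly_eq:
  "char_poly (trans_mat n d E - Jc n) * [:-1,1:] = char_poly (trans_mat n d E) * [:0,1:]"
proof -
  define p where "p = char_poly (trans_mat n d E - Jc n) * [:-1,1:] - char_poly (trans_mat n d E) * [:0,1:]"
  have "p = 0"
  proof (rule ccontr)
    assume "p \<noteq> 0"
    hence fin: "finite {x. poly p x = 0}" by (rule poly_roots_finite)
    have "UNIV - {1} \<subseteq> {x. poly p x = 0}"
      using charpoly_pointwise unfolding p_def by (auto simp: algebra_simps)
    hence "finite (UNIV - {1::complex})" using fin finite_subset by blast
    thus False using infinite_UNIV_char_0[where 'a=complex] by simp
  qed
  thus ?thesis unfolding p_def by simp
qed

lemma eigen_R_bound:
  assumes sb: "spectral_bound (trans_mat n d E) \<rho>"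
    and ev: "poly (char_poly (trans_mat n d E - Jc n)) z = 0"
  shows "cmod z \<le> max \<rho> 0"
proof -
  from sb obtain q where q: "char_poly (trans_mat n d E) = [:-1, 1:] * q"
    and qr: "\<And>z. poly q z = 0 \<Longrightarrow> cmod z \<le> \<rho>" unfolding spectral_bound_def by blast
  have "char_poly (trans_mat n d E - Jc n) * [:-1,1:] = (q * [:0,1:]) * [:-1,1:]"
    unfolding charpoly_eq q by (simp add: ac_simps)
  hence "char_poly (trans_mat n d E - Jc n) = q * [:0,1:]" by (rule mult_right_cancel[THEN iffD1, rotated], simp)
  hence "poly q z * z = 0" using ev by auto
  thus ?thesis using qr by fastforce
qed

lemma R_entry_decay:
  assumes sb: "spectral_bound (trans_mat n d E) \<rho>" and r: "max \<rho> 0 < r"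
  shows "\<exists>c. \<forall>k i j. i < n \<longrightarrow> j < n \<longrightarrow> \<bar>(Rr n d E ^\<^sub>m k) $$ (i,j)\<bar> \<le> c * r ^ k"
proof -
  let ?R = "of_real_hom.mat_hom (Rr n d E) :: complex mat"
  define A where "A = (complex_of_real (1 / r)) \<cdot>\<^sub>m ?R"
  have rpos: "r > 0" using r by simp
  have R: "?R \<in> carrier_mat n n" by simp
  have A: "A \<in> carrier_mat n n" unfolding A_def by simp
  have ev_bound: "cmod \<mu> < 1" if ev: "eigenvalue A \<mu>" for \<mu>
  proof -
    from ev obtain v where v: "v \<in> carrier_vec n" "v \<noteq> 0\<^sub>v n" "A *\<^sub>v v = \<mu> \<cdot>\<^sub>v v"
      unfolding eigenvalue_def eigenvector_def using A by auto
    have "?R *\<^sub>v v = (complex_of_real r * \<mu>) \<cdot>\<^sub>v v"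
    proof (rule eq_vecI)
      fix i assume "i < dim_vec ((complex_of_real r * \<mu>) \<cdot>\<^sub>v v)"
      hence i: "i < n" using v by simp
      have "(A *\<^sub>v v) $ i = row A i \<bullet> v" using i A by simp
      also have "row A i = complex_of_real (1 / r) \<cdot>\<^sub>v row ?R i" unfolding A_def by (rule row_smult, insert i R, simp)
      also have "(complex_of_real (1 / r) \<cdot>\<^sub>v row ?R i) \<bullet> v = complex_of_real (1 / r) * (row ?R i \<bullet> v)"
        by (rule smult_scalar_prod_distrib[of _ n], insert v(1) R i, auto)
      also have "row ?R i \<bullet> v = (?R *\<^sub>v v) $ i" using i R by simp
      finally have "(A *\<^sub>v v) $ i = complex_of_real (1 / r) * (?R *\<^sub>v v) $ i" .
      hence "(?R *\<^sub>v v) $ i = complex_of_real r * (A *\<^sub>v v) $ i" using rpos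
        by (simp add: field_simps)
      thus "(?R *\<^sub>v v) $ i = ((complex_of_real r * \<mu>) \<cdot>\<^sub>v v) $ i" using v i by simp
    qed (insert v R, auto)
    hence "eigenvalue ?R (complex_of_real r * \<mu>)"
      unfolding eigenvalue_def eigenvector_def using v R by auto
    hence "poly (char_poly ?R) (complex_of_real r * \<mu>) = 0" using eigenvalue_root_char_poly[OF R] by simp
    hence "cmod (complex_of_real r * \<mu>) \<le> max \<rho> 0" using eigen_R_bound[OF sb] unfolding Rc_eq by blast
    hence "r * cmod \<mu> \<le> max \<rho> 0" using rpos by (simp add: norm_mult)
    hence "r * cmod \<mu> < r * 1" using r by linarith
    thus ?thesis using rpos by (metis mult_less_cancel_left_pos)
  qed
  have "spectral_radius A \<in> norm ` spectrum A" by (rule spectral_radius_mem_max(1)[OF A npos])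
  hence "spectral_radius A < 1" using ev_bound unfolding spectrum_def by auto
  from spectral_radius_jnf_norm_bound_less_1_upper_triangular[OF A this]
  obtain c where c: "\<And>k. norm_bound (A ^\<^sub>m k) c" by blast
  have Apow: "A ^\<^sub>m k = (complex_of_real (1 / r) ^ k) \<cdot>\<^sub>m (?R ^\<^sub>m k)" for k
  proof (induct k)
    case 0 thus ?case unfolding A_def by (rule eq_matI, auto)
  next
    case (Suc k)
    have "A ^\<^sub>m Suc k = ((complex_of_real (1 / r) ^ k) \<cdot>\<^sub>m (?R ^\<^sub>m k)) * A" using Suc by simp
    also have "\<dots> = (complex_of_real (1 / r) ^ Suc k) \<cdot>\<^sub>m (?R ^\<^sub>m k * ?R)"
      unfolding A_def
      by (subst mult_smult_assoc_mat[of _ n n _ n], simp, simp, subst mult_smult_distrib[of _ n n _ n], auto)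
    finally show ?case by simp
  qed
  show ?thesis
  proof (intro exI allI impI)
    fix k i j assume i: "i < n" and j: "j < n"
    have "norm ((A ^\<^sub>m k) $$ (i,j)) \<le> c" using c[of k] i j A unfolding norm_bound_def by simp
    moreover have "(A ^\<^sub>m k) $$ (i,j) = complex_of_real ((1 / r) ^ k * (Rr n d E ^\<^sub>m k) $$ (i,j))"
    proof -
      have e: "(?R ^\<^sub>m k) $$ (i,j) = complex_of_real ((Rr n d E ^\<^sub>m k) $$ (i,j))"
        unfolding of_real_hom.mat_hom_pow[OF Rr_carrier[of n d E], symmetric] using i j by simp
      have "(A ^\<^sub>m k) $$ (i,j) = complex_of_real (1 / r) ^ k * (?R ^\<^sub>m k) $$ (i,j)"
        unfolding Apow using i j by simp
      thus ?thesis unfolding e by simp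
    qed
    ultimately have "\<bar>(1 / r) ^ k * (Rr n d E ^\<^sub>m k) $$ (i,j)\<bar> \<le> c" by (metis norm_of_real)
    hence "(1 / r) ^ k * \<bar>(Rr n d E ^\<^sub>m k) $$ (i,j)\<bar> \<le> c" using rpos by (simp add: abs_mult)
    thus "\<bar>(Rr n d E ^\<^sub>m k) $$ (i,j)\<bar> \<le> c * r ^ k" using rpos by (simp add: field_simps power_divide)
  qed
qed

end


fun pW :: "(nat \<Rightarrow> nat \<Rightarrow> real) \<Rightarrow> nat \<Rightarrow> nat \<Rightarrow> nat \<Rightarrow> nat \<Rightarrow> real" where
  "pW P n v 0 x = (if x = v then 1 else 0)"
| "pW P n v (Suc k) x = (\<Sum>y\<in>{0..<n}. P x y * pW P n v k y)"

fun gW :: "(nat \<Rightarrow> nat \<Rightarrow> real) \<Rightarrow> nat \<Rightarrow> nat \<Rightarrow> nat \<Rightarrow> nat \<Rightarrow> nat \<Rightarrow> real" where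
  "gW P n v j 0 x = (if j = 0 \<and> x = v then 1 else 0)"
| "gW P n v j (Suc k) x = (if x = v then (case j of 0 \<Rightarrow> 0 | Suc j' \<Rightarrow> (\<Sum>y\<in>{0..<n}. P x y * gW P n v j' k y))
      else (\<Sum>y\<in>{0..<n}. P x y * gW P n v j k y))"

fun FW :: "(nat \<Rightarrow> nat \<Rightarrow> real) \<Rightarrow> nat \<Rightarrow> nat \<Rightarrow> real \<Rightarrow> nat \<Rightarrow> nat \<Rightarrow> real" where
  "FW P n v a 0 x = (if x = v then 1 else 0)"
| "FW P n v a (Suc k) x = (if x = v then a else 1) * (\<Sum>y\<in>{0..<n}. P x y * FW P n v a k y)"

declare pW.simps(2)[simp del]

context fixes P :: "nat \<Rightarrow> nat \<Rightarrow> real" and n v :: nat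
  assumes Pnn: "\<And>x y. P x y \<ge> 0"
begin

lemma g_zero: "k < j \<Longrightarrow> gW P n v j k x = 0"
proof (induct k arbitrary: j x)
  case 0 thus ?case by simp
next
  case (Suc k)
  then obtain j' where j: "j = Suc j'" and "k < j'" by (cases j, auto)
  thus ?case using Suc by simp
qed

lemma g_nonneg: "gW P n v j k x \<ge> 0"
proof (induct k arbitrary: j x)
  case 0 thus ?case by simp
next
  case (Suc k)
  thus ?case using Pnn by (auto split: nat.split intro!: sum_nonneg mult_nonneg_nonneg)
qed

lemma p_nonneg: "pW P n v k x \<ge> 0"
  by (induct k arbitrary: x, auto simp: pW.simps(2) intro!: sum_nonneg mult_nonneg_nonneg Pnn)

lemma g_step_other: assumes "x \<noteq> v"
  shows "(\<Sum>j\<le>Suc k. h j * gW P n v j (Suc k) x) = (\<Sum>y\<in>{0..<n}. P x y * (\<Sum>j\<le>k. h j * gW P n v j k y))"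
proof -
  have "(\<Sum>j\<le>Suc k. h j * gW P n v j (Suc k) x) = (\<Sum>j\<le>Suc k. \<Sum>y\<in>{0..<n}. P x y * (h j * gW P n v j k y))"
    using assms by (simp add: sum_distrib_left ac_simps)
  also have "\<dots> = (\<Sum>y\<in>{0..<n}. \<Sum>j\<le>Suc k. P x y * (h j * gW P n v j k y))" by (rule sum.swap)
  also have "\<dots> = (\<Sum>y\<in>{0..<n}. P x y * (\<Sum>j\<le>k. h j * gW P n v j k y))"
    by (rule sum.cong, simp, simp add: sum_distrib_left[symmetric] g_zero)
  finally show ?thesis .
qed

lemma g_step_v:
  shows "(\<Sum>j\<le>Suc k. h j * gW P n v j (Suc k) v) = (\<Sum>y\<in>{0..<n}. P v y * (\<Sum>j\<le>k. h (Suc j) * gW P n v j k y))"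
proof -
  have "(\<Sum>j\<le>Suc k. h j * gW P n v j (Suc k) v) = h 0 * gW P n v 0 (Suc k) v + (\<Sum>j\<le>k. h (Suc j) * gW P n v (Suc j) (Suc k) v)"
    by (rule sum.atMost_Suc_shift)
  also have "\<dots> = (\<Sum>j\<le>k. \<Sum>y\<in>{0..<n}. P v y * (h (Suc j) * gW P n v j k y))"
    by (simp add: sum_distrib_left ac_simps)
  also have "\<dots> = (\<Sum>y\<in>{0..<n}. \<Sum>j\<le>k. P v y * (h (Suc j) * gW P n v j k y))" by (rule sum.swap)
  also have "\<dots> = (\<Sum>y\<in>{0..<n}. P v y * (\<Sum>j\<le>k. h (Suc j) * gW P n v j k y))"
    by (simp add: sum_distrib_left)
  finally show ?thesis .
qed

lemma g_sum: "(\<Sum>j\<le>k. gW P n v j k x) = pW P n v k x"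
proof (induct k arbitrary: x)
  case 0 thus ?case by simp
next
  case (Suc k)
  show ?case
  proof (cases "x = v")
    case True
    have "(\<Sum>j\<le>Suc k. gW P n v j (Suc k) x) = (\<Sum>j\<le>Suc k. 1 * gW P n v j (Suc k) x)" by simp
    also have "\<dots> = (\<Sum>y\<in>{0..<n}. P v y * (\<Sum>j\<le>k. 1 * gW P n v j k y))" unfolding True by (rule g_step_v)
    also have "\<dots> = pW P n v (Suc k) x" using Suc True by (simp add: pW.simps(2))
    finally show ?thesis .
  next
    case False
    have "(\<Sum>j\<le>Suc k. gW P n v j (Suc k) x) = (\<Sum>j\<le>Suc k. 1 * gW P n v j (Suc k) x)" by simp
    also have "\<dots> = (\<Sum>y\<in>{0..<n}. P x y * (\<Sum>j\<le>k. 1 * gW P n v j k y))" by (rule g_step_other[OF False])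
    also have "\<dots> = pW P n v (Suc k) x" using Suc by (simp add: pW.simps(2))
    finally show ?thesis .
  qed
qed

lemma g_sum1: "(\<Sum>j\<le>k. real j * gW P n v j k x) = (\<Sum>s<k. pW P n v s x * pW P n v (k - s) v)"
proof (induct k arbitrary: x)
  case 0 thus ?case by simp
next
  case (Suc k)
  have shift: "(\<Sum>s<Suc k. pW P n v s x * pW P n v (Suc k - s) v)
      = pW P n v 0 x * pW P n v (Suc k) v + (\<Sum>s<k. pW P n v (Suc s) x * pW P n v (k - s) v)"
    by (subst sum.lessThan_Suc_shift, simp)
  have inner: "(\<Sum>y\<in>{0..<n}. P x y * (\<Sum>s<k. pW P n v s y * pW P n v (k - s) v))
      = (\<Sum>s<k. pW P n v (Suc s) x * pW P n v (k - s) v)"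
  proof -
    have "(\<Sum>y\<in>{0..<n}. P x y * (\<Sum>s<k. pW P n v s y * pW P n v (k - s) v))
      = (\<Sum>y\<in>{0..<n}. \<Sum>s<k. P x y * pW P n v s y * pW P n v (k - s) v)"
      by (simp add: sum_distrib_left ac_simps)
    also have "\<dots> = (\<Sum>s<k. \<Sum>y\<in>{0..<n}. P x y * pW P n v s y * pW P n v (k - s) v)" by (rule sum.swap)
    also have "\<dots> = (\<Sum>s<k. pW P n v (Suc s) x * pW P n v (k - s) v)"
      by (simp add: sum_distrib_right pW.simps(2))
    finally show ?thesis .
  qed
  show ?case
  proof (cases "x = v")
    case True
    have "(\<Sum>j\<le>Suc k. real j * gW P n v j (Suc k) x) = (\<Sum>y\<in>{0..<n}. P v y * (\<Sum>j\<le>k. real (Suc j) * gW P n v j k y))"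
      unfolding True by (rule g_step_v)
    also have "\<dots> = (\<Sum>y\<in>{0..<n}. P v y * ((\<Sum>j\<le>k. real j * gW P n v j k y) + (\<Sum>j\<le>k. gW P n v j k y)))"
      by (simp add: sum.distrib algebra_simps)
    also have "\<dots> = (\<Sum>y\<in>{0..<n}. P v y * (\<Sum>s<k. pW P n v s y * pW P n v (k - s) v)) + pW P n v (Suc k) v"
      by (simp add: Suc g_sum algebra_simps sum.distrib pW.simps(2) sum_distrib_left)
    also have "\<dots> = (\<Sum>s<Suc k. pW P n v s x * pW P n v (Suc k - s) v)"
      using shift inner True by simp
    finally show ?thesis .
  next
    case False
    have "(\<Sum>j\<le>Suc k. real j * gW P n v j (Suc k) x) = (\<Sum>y\<in>{0..<n}. P x y * (\<Sum>j\<le>k. real j * gW P n v j k y))"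
      by (rule g_step_other[OF False])
    also have "\<dots> = (\<Sum>s<Suc k. pW P n v s x * pW P n v (Suc k - s) v)"
      unfolding shift inner[symmetric] Suc using False by simp
    finally show ?thesis .
  qed
qed

lemma F_sum: "FW P n v a k x = (\<Sum>j\<le>k. a ^ j * gW P n v j k x)"
proof (induct k arbitrary: x)
  case 0 thus ?case by simp
next
  case (Suc k)
  show ?case
  proof (cases "x = v")
    case True
    have "(\<Sum>j\<le>Suc k. a ^ j * gW P n v j (Suc k) x) = (\<Sum>y\<in>{0..<n}. P v y * (\<Sum>j\<le>k. a ^ Suc j * gW P n v j k y))"
      unfolding True by (rule g_step_v)
    also have "\<dots> = a * (\<Sum>y\<in>{0..<n}. P v y * FW P n v a k y)"
      by (simp add: Suc sum_distrib_left ac_simps)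
    finally show ?thesis using True by simp
  next
    case False
    have "(\<Sum>j\<le>Suc k. a ^ j * gW P n v j (Suc k) x) = (\<Sum>y\<in>{0..<n}. P x y * (\<Sum>j\<le>k. a ^ j * gW P n v j k y))"
      by (rule g_step_other[OF False])
    thus ?thesis using False Suc by simp
  qed
qed

lemma pow_lower: fixes a :: real assumes "0 < a" "a \<le> 1"
  shows "a ^ j \<ge> a ^ M * (1 - real j / (real M + 1))"
proof (cases "j \<le> M")
  case True
  have "a ^ M \<le> a ^ j" by (rule power_decreasing[OF True], insert assms, auto)
  moreover have "a ^ M * (1 - real j / (real M + 1)) \<le> a ^ M"
    using assms by (simp add: mult_left_le)
  ultimately show ?thesis by linarith
next
  case False
  hence "1 - real j / (real M + 1) \<le> 0" by (simp add: field_simps)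
  hence "a ^ M * (1 - real j / (real M + 1)) \<le> 0" using assms by (simp add: mult_nonneg_nonpos)
  thus ?thesis using assms by (smt (verit) zero_le_power)
qed

lemma F_lower: assumes "0 < a" "a \<le> 1"
  shows "FW P n v a k x \<ge> a ^ M * (pW P n v k x - (\<Sum>s<k. pW P n v s x * pW P n v (k - s) v) / (real M + 1))"
proof -
  have "a ^ M * (pW P n v k x - (\<Sum>s<k. pW P n v s x * pW P n v (k - s) v) / (real M + 1))
      = (\<Sum>j\<le>k. a ^ M * (1 - real j / (real M + 1)) * gW P n v j k x)"
  proof -
    have "pW P n v k x - (\<Sum>s<k. pW P n v s x * pW P n v (k - s) v) / (real M + 1)
       = (\<Sum>j\<le>k. gW P n v j k x) - (\<Sum>j\<le>k. real j * gW P n v j k x) / (real M + 1)"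
      by (simp only: g_sum g_sum1)
    also have "\<dots> = (\<Sum>j\<le>k. (1 - real j / (real M + 1)) * gW P n v j k x)"
      by (simp add: algebra_simps sum_subtractf sum_divide_distrib)
    finally show ?thesis by (simp add: sum_distrib_left ac_simps)
  qed
  also have "\<dots> \<le> (\<Sum>j\<le>k. a ^ j * gW P n v j k x)"
    by (rule sum_mono, rule mult_right_mono[OF pow_lower[OF assms] g_nonneg])
  also have "\<dots> = FW P n v a k x" by (rule F_sum[symmetric])
  finally show ?thesis .
qed

end


definition Pf :: "nat \<Rightarrow> (nat \<Rightarrow> nat \<Rightarrow> bool) \<Rightarrow> nat \<Rightarrow> nat \<Rightarrow> real" where
  "Pf d E x y = (if E x y then 1 / real d else 0)"

context fixes n d E assumes reg: "regular_graph n d E" and dpos: "d > 0" and npos: "n > 0"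
begin

lemma spectral_final:
  assumes sb: "spectral_bound (trans_mat n d E) \<rho>" and r: "max \<rho> 0 < r"
    and x: "x < n" and w: "w < n"
  shows "\<bar>(Pr n d E ^\<^sub>m s) $$ (x,w) - 1 / real n\<bar> \<le> r ^ s"
proof -
  from R_entry_decay[OF reg dpos npos sb r] obtain c where
    c0: "\<forall>k i j. i < n \<longrightarrow> j < n \<longrightarrow> \<bar>(Rr n d E ^\<^sub>m k) $$ (i,j)\<bar> \<le> c * r ^ k" ..
  have c: "\<And>k i j. i < n \<Longrightarrow> j < n \<Longrightarrow> \<bar>(Rr n d E ^\<^sub>m k) $$ (i,j)\<bar> \<le> c * r ^ k"
    using c0 by simp
  have rpos: "r > 0" using r by simp
  show ?thesis
  proof (cases s)
    case 0
    have "(Pr n d E ^\<^sub>m s) $$ (x,w) = (if x = w then 1 else 0)" using 0 x w by simp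
    moreover have "1 / real n \<le> 1" "1 / real n \<ge> 0" using npos by auto
    ultimately show ?thesis using 0 by auto
  next
    case (Suc s')
    have "(Pr n d E ^\<^sub>m s) $$ (x,w) = 1 / real n + (Rr n d E ^\<^sub>m s) $$ (x,w)"
      unfolding Suc Ppow[OF reg dpos npos] using x w by (simp add: Jr_def)
    moreover have "\<bar>(Rr n d E ^\<^sub>m s) $$ (x,w)\<bar> \<le> r ^ s"
      by (rule entry_bound[OF Rr_carrier Rr_sym[OF reg dpos npos] c rpos x w])
    ultimately show ?thesis by simp
  qed
qed

lemma pW_Pr: "v < n \<Longrightarrow> x < n \<Longrightarrow> pW (Pf d E) n v s x = (Pr n d E ^\<^sub>m s) $$ (x,v)"
proof (induct s arbitrary: x)
  case 0 thus ?case by simp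
next
  case (Suc s)
  have "Pr n d E ^\<^sub>m Suc s = Pr n d E ^\<^sub>m 1 * Pr n d E ^\<^sub>m s"
    using mpow_add[OF Pr_carrier Pr_sym[OF reg dpos npos], of 1 s] by simp
  also have "Pr n d E ^\<^sub>m 1 = Pr n d E" by simp
  finally have e: "Pr n d E ^\<^sub>m Suc s = Pr n d E * Pr n d E ^\<^sub>m s" .
  have "(Pr n d E ^\<^sub>m Suc s) $$ (x,v) = row (Pr n d E) x \<bullet> col (Pr n d E ^\<^sub>m s) v"
    unfolding e using Suc.prems by simp
  also have "\<dots> = (\<Sum>l\<in>{0..<n}. Pr n d E $$ (x,l) * (Pr n d E ^\<^sub>m s) $$ (l,v))"
  proof -
    have dv: "dim_vec (col (Pr n d E ^\<^sub>m s) v) = n" by simp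
    show ?thesis unfolding scalar_prod_def dv by (rule sum.cong, insert Suc.prems, auto)
  qed
  also have "\<dots> = (\<Sum>l\<in>{0..<n}. Pf d E x l * pW (Pf d E) n v s l)"
  proof (rule sum.cong)
    fix l assume l: "l \<in> {0..<n}"
    hence "(Pr n d E ^\<^sub>m s) $$ (l,v) = pW (Pf d E) n v s l" using Suc.hyps[OF Suc.prems(1), of l] by simp
    thus "Pr n d E $$ (x,l) * (Pr n d E ^\<^sub>m s) $$ (l,v) = Pf d E x l * pW (Pf d E) n v s l"
      using l Suc.prems by (simp add: Pr_def Pf_def)
  qed simp
  also have "\<dots> = pW (Pf d E) n v (Suc s) x" by (simp add: pW.simps(2))
  finally show ?case ..
qed

end


context fixes n d E v assumes reg: "regular_graph n d E" and dpos: "d > 0" and v: "v < n"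
begin

lemma deg_ext: assumes x: "x < n"
  shows "card {z \<in> {0..n}. ext_adj n v E x z} = (if x = v then d + 1 else d)"
proof -
  have Eb: "\<And>z. E x z \<Longrightarrow> z < n" using Ebound[OF reg dpos] by blast
  show ?thesis
  proof (cases "x = v")
    case True
    have "{z \<in> {0..n}. ext_adj n v E x z} = insert n {z \<in> {0..<n}. E x z}"
      using True x by (auto simp: ext_adj_def dest: Ebound[OF reg dpos])
    moreover have "n \<notin> {z \<in> {0..<n}. E x z}" by simp
    ultimately show ?thesis using Edeg'[OF reg dpos x] True by simp
  next
    case False
    have "{z \<in> {0..n}. ext_adj n v E x z} = {z \<in> {0..<n}. E x z}"
      using False x by (auto simp: ext_adj_def dest: Ebound[OF reg dpos])
    thus ?thesis using Edeg'[OF reg dpos x] False by simp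
  qed
qed

lemma p_n: "x < n \<Longrightarrow> srw_prob {0..n} (ext_adj n v E) x n = (if x = v then 1 / (real d + 1) else 0)"
  using deg_ext[of x] Ebound[OF reg dpos, of x n] by (auto simp: srw_prob_def ext_adj_def)

lemma p_in: "x < n \<Longrightarrow> y < n \<Longrightarrow> srw_prob {0..n} (ext_adj n v E) x y
   = (if x = v then real d / (real d + 1) else 1) * Pf d E x y"
  using deg_ext[of x] dpos by (auto simp: srw_prob_def ext_adj_def Pf_def)

lemma fh: "u < n \<Longrightarrow> first_hit {0..n} (srw_prob {0..n} (ext_adj n v E)) n (Suc k) u
   = FW (Pf d E) n v (real d / (real d + 1)) k u / (real d + 1)"
proof (induct k arbitrary: u)
  case 0 thus ?case using p_n by simp
next
  case (Suc k)
  let ?p = "srw_prob {0..n} (ext_adj n v E)"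
  let ?a = "real d / (real d + 1)"
  have e: "{0..n} - {n} = {0..<n}" by auto
  have "first_hit {0..n} ?p n (Suc (Suc k)) u = (\<Sum>x\<in>{0..<n}. ?p u x * first_hit {0..n} ?p n (Suc k) x)"
    by (simp only: first_hit.simps e)
  also have "\<dots> = (\<Sum>x\<in>{0..<n}. ((if u = v then ?a else 1) * Pf d E u x) * (FW (Pf d E) n v ?a k x / (real d + 1)))"
    by (rule sum.cong, simp, simp add: Suc.hyps p_in Suc.prems)
  also have "\<dots> = FW (Pf d E) n v ?a (Suc k) u / (real d + 1)"
    by (simp add: sum_distrib_left sum_divide_distrib ac_simps)
  finally show ?case .
qed

end

lemma geo_bound: fixes r :: real assumes "0 \<le> r" "r < 1"
  shows "(\<Sum>s<k. r ^ s) \<le> 1 / (1 - r)"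
proof -
  have "(\<Sum>s<k. r ^ s) = (1 - r ^ k) / (1 - r)" using assms by (simp add: sum_gp_strict)
  also have "\<dots> \<le> 1 / (1 - r)" using assms by (simp add: divide_right_mono)
  finally show ?thesis .
qed

lemma geo_bound2: fixes r :: real assumes "0 \<le> r" "r < 1"
  shows "(\<Sum>s<k. r ^ (k - s)) \<le> 1 / (1 - r)"
proof -
  have "(\<Sum>s<k. r ^ (k - s)) = (\<Sum>s<k. (\<lambda>i. r ^ Suc i) (k - Suc s))"
    by (rule sum.cong, auto simp: Suc_diff_Suc)
  also have "\<dots> = (\<Sum>i<k. r ^ Suc i)" by (rule sum.nat_diff_reindex)
  also have "\<dots> = r * (\<Sum>i<k. r ^ i)" by (simp add: sum_distrib_left)
  also have "\<dots> \<le> 1 * (\<Sum>i<k. r ^ i)" by (rule mult_right_mono, insert assms, auto intro: sum_nonneg)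
  also have "\<dots> \<le> 1 / (1 - r)" using geo_bound[OF assms] by simp
  finally show ?thesis .
qed


theorem lemma3p3:
  fixes d :: nat and \<rho> :: real
  assumes "d \<ge> 3" and "\<rho> < 1"
  shows "\<exists>C c. C > 0 \<and> c > 0 \<and> (\<exists>N. \<forall>n \<ge> N. \<forall>E v.
           regular_graph n d E \<and> spectral_bound (trans_mat n d E) \<rho> \<and> v < n \<longrightarrow>
           (\<forall>t u. C * ln (real n) \<le> real t \<and> t \<le> n \<and> u < n \<longrightarrow>
              first_hit {0..n} (srw_prob {0..n} (ext_adj n v E)) n t u \<ge> c / real n))"
proof -
  have dpos: "d > 0" using assms(1) by simp
  define r0 where "r0 = max \<rho> 0"
  define r where "r = (1 + r0) / 2"
  have r0: "0 \<le> r0" "r0 < 1" unfolding r0_def using assms(2) by auto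
  have r: "r0 < r" "r < 1" "1/2 \<le> r" "0 < r" unfolding r_def using r0 by auto
  define a where "a = real d / (real d + 1)"
  define B where "B = 2 + 2 / (1 - r)"
  define M where "M = nat \<lceil>4 * B\<rceil>"
  define c where "c = a ^ M / (4 * (real d + 1))"
  define C where "C = 4 / (- ln r)"
  have lnr: "ln r < 0" using r by simp
  have lnr2: "- ln r \<le> ln 2"
  proof -
    have "ln (1/2) \<le> ln r" using r by (subst ln_le_cancel_iff, auto)
    thus ?thesis by (simp add: ln_div)
  qed
  have a: "0 < a" "a \<le> 1" unfolding a_def using dpos by auto
  have Bpos: "B > 0"
  proof -
    have "1 - r > 0" using r by simp
    hence "2 / (1 - r) > 0" by simp
    thus ?thesis unfolding B_def by linarith
  qed
  have MB: "4 * B \<le> real M + 1" unfolding M_def using Bpos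
    by (smt (verit) of_nat_nat real_nat_ceiling_ge ceiling_le_zero)
  have Cpos: "C > 0" unfolding C_def using lnr by simp
  have cpos: "c > 0" unfolding c_def using a by simp
  show ?thesis
  proof (rule exI[of _ C], rule exI[of _ c], intro conjI Cpos cpos, rule exI[of _ "2::nat"], intro allI impI)
    fix n E v t u
    assume n2: "2 \<le> n"
      and H: "regular_graph n d E \<and> spectral_bound (trans_mat n d E) \<rho> \<and> v < n"
      and T: "C * ln (real n) \<le> real t \<and> t \<le> n \<and> u < n"
    have reg: "regular_graph n d E" and sb: "spectral_bound (trans_mat n d E) \<rho>" and v: "v < n"
      using H by auto
    have tn: "t \<le> n" and u: "u < n" and Ct: "C * ln (real n) \<le> real t" using T by auto
    have npos: "n > 0" using n2 by simp
    have rn2: "real n \<ge> 2" using n2 by simp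
    have lnn: "ln 2 \<le> ln (real n)" using rn2 by simp
    have ln2: "ln (2::real) > 0" by simp
    define L where "L = 2 * ln (real n) / (- ln r)"
    have L1: "L \<ge> 1"
    proof -
      have "2 * ln (real n) \<ge> 2 * ln 2" using lnn by simp
      moreover have "2 * ln 2 \<ge> - ln r" using lnr2 ln2 by linarith
      ultimately have "2 * ln (real n) \<ge> - ln r" by simp
      thus ?thesis unfolding L_def using lnr by (subst le_divide_eq_1_pos, auto)
    qed
    have CL: "C * ln (real n) = 2 * L" unfolding C_def L_def by simp
    have t1: "real t \<ge> 2 * L" using Ct CL by simp
    then obtain k where tk: "t = Suc k" using L1 by (cases t, auto)
    have kL: "real k \<ge> L" using t1 L1 tk by simp
    have kn: "k < n" using tn tk by simp
    have ek: "r ^ k \<le> 1 / (real n)\<^sup>2"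
    proof -
      have "r ^ k = exp (real k * ln r)" using r by (simp add: exp_ln ln_realpow[symmetric])
      also have "\<dots> \<le> exp (L * ln r)" using kL lnr by (simp add: mult_right_mono_neg)
      also have "L * ln r = - (ln (real n) + ln (real n))" unfolding L_def using lnr by (simp add: field_simps)
      also have "exp (- (ln (real n) + ln (real n))) = 1 / (real n)\<^sup>2"
      proof -
        have "exp (ln (real n) + ln (real n)) = real n * real n" using npos by (simp only: exp_add, simp)
        thus ?thesis by (simp only: exp_minus power2_eq_square inverse_eq_divide)
      qed
      finally show ?thesis .
    qed
    define P where "P = Pf d E"
    have Pnn: "\<And>x y. P x y \<ge> 0" unfolding P_def Pf_def by simp
    have sp: "\<bar>pW P n v s x - 1 / real n\<bar> \<le> r ^ s" if x: "x < n" for s x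
      unfolding P_def pW_Pr[OF reg dpos npos v x]
      by (rule spectral_final[OF reg dpos npos sb _ x v], insert r r0_def, simp)
    have pnn: "pW P n v s x \<ge> 0" for s x by (rule p_nonneg[OF Pnn])
    have up: "pW P n v s x \<le> 1 / real n + r ^ s" if "x < n" for s x using sp[OF that, of s] by simp
    have low: "pW P n v k u \<ge> 1 / (2 * real n)"
    proof -
      have "pW P n v k u \<ge> 1 / real n - r ^ k" using sp[OF u, of k] by simp
      moreover have "1 / real n - 1 / (real n)\<^sup>2 \<ge> 1 / (2 * real n)"
        using rn2 by (simp add: field_simps power2_eq_square)
      ultimately show ?thesis using ek by simp
    qed
    define S where "S = (\<Sum>s<k. pW P n v s u * pW P n v (k - s) v)"
    have Sb: "S \<le> B / real n"
    proof -
      have "S \<le> (\<Sum>s<k. (1 / real n + r ^ s) * (1 / real n + r ^ (k - s)))"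
        unfolding S_def
        by (rule sum_mono, rule mult_mono, insert r, auto intro: up u v pnn add_nonneg_nonneg zero_le_power)
      also have "\<dots> = (\<Sum>s<k. 1 / (real n)\<^sup>2 + r ^ (k - s) / real n + r ^ s / real n + r ^ k)"
      proof (rule sum.cong)
        fix s assume "s \<in> {..<k}"
        hence "r ^ s * r ^ (k - s) = r ^ k" by (simp add: power_add[symmetric])
        thus "(1 / real n + r ^ s) * (1 / real n + r ^ (k - s)) = 1 / (real n)\<^sup>2 + r ^ (k - s) / real n + r ^ s / real n + r ^ k"
          by (simp add: algebra_simps power2_eq_square)
      qed simp
      also have "\<dots> = real k / (real n)\<^sup>2 + (\<Sum>s<k. r ^ (k - s)) / real n + (\<Sum>s<k. r ^ s) / real n + real k * r ^ k"
        by (simp add: sum.distrib sum_divide_distrib)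
      also have "\<dots> \<le> 1 / real n + (1 / (1 - r)) / real n + (1 / (1 - r)) / real n + 1 / real n"
      proof -
        have 1: "real k / (real n)\<^sup>2 \<le> 1 / real n" using kn npos by (simp add: field_simps power2_eq_square)
        have 2: "(\<Sum>s<k. r ^ (k - s)) / real n \<le> (1 / (1 - r)) / real n"
          by (rule divide_right_mono[OF geo_bound2], insert r r0, auto)
        have 3: "(\<Sum>s<k. r ^ s) / real n \<le> (1 / (1 - r)) / real n"
          by (rule divide_right_mono[OF geo_bound], insert r r0, auto)
        have "real k * r ^ k \<le> real n * (1 / (real n)\<^sup>2)"
          by (rule mult_mono, insert kn ek r, auto)
        hence 4: "real k * r ^ k \<le> 1 / real n" using npos by (simp add: power2_eq_square)
        show ?thesis using 1 2 3 4 by linarith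
      qed
      also have "\<dots> = B / real n"
      proof -
        have h1: "1 - r \<noteq> 0" using r by simp
        have h2: "real n \<noteq> 0" using npos by simp
        have g: "\<And>q::real. 1 / real n + q / real n + q / real n + 1 / real n = (2 + 2 * q) / real n"
          using h2 by (simp add: field_simps)
        have "2 / (1 - r) = 2 * (1 / (1 - r))" by simp
        thus ?thesis unfolding B_def using g[of "1 / (1 - r)"] by simp
      qed
      finally show ?thesis .
    qed
    have F: "FW P n v a k u \<ge> a ^ M * (pW P n v k u - S / (real M + 1))"
      unfolding S_def by (rule F_lower[OF Pnn a])
    have "S / (real M + 1) \<le> (B / real n) / (real M + 1)"
      by (rule divide_right_mono[OF Sb], simp)
    also have "\<dots> \<le> 1 / (4 * real n)"
    proof -
      have Mp: "real M + 1 > 0" by simp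
      have q: "B / (real M + 1) \<le> 1 / 4" unfolding pos_divide_le_eq[OF Mp] using MB by (simp add: field_simps)
      have "(B / real n) / (real M + 1) = (B / (real M + 1)) / real n" by simp
      also have "\<dots> \<le> (1 / 4) / real n" by (rule divide_right_mono[OF q], simp)
      finally show ?thesis by simp
    qed
    finally have "pW P n v k u - S / (real M + 1) \<ge> 1 / (4 * real n)" using low by simp
    hence "FW P n v a k u \<ge> a ^ M * (1 / (4 * real n))"
      using F a by (smt (verit) mult_left_mono zero_le_power)
    hence "FW P n v a k u / (real d + 1) \<ge> a ^ M * (1 / (4 * real n)) / (real d + 1)"
      by (rule divide_right_mono, simp)
    moreover have "a ^ M * (1 / (4 * real n)) / (real d + 1) = c / real n"
      unfolding c_def by (simp add: field_simps)
    moreover have "first_hit {0..n} (srw_prob {0..n} (ext_adj n v E)) n t u = FW P n v a k u / (real d + 1)"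
      unfolding tk P_def a_def by (rule fh[OF reg dpos v u])
    ultimately show "first_hit {0..n} (srw_prob {0..n} (ext_adj n v E)) n t u \<ge> c / real n" by simp
  qed
qed


end
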